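(* There exists a PBD$(53,\{3,5\})$ of dimension three.
   Context: For a positive integer $v$ and $K \subseteq \{2,3,4,\dots\}$, a pairwise balanced design PBD$(v,K)$ is a pair $(X,\mathcal{B})$ where $X$ is a $v$-set of points and $\mathcal{B}$ is a family of subsets of $X$ (blocks), each of size in $K$, such that any two distinct points of $X$ lie together in exactly one block. A flat (subdesign) is a pair $(Y,\mathcal{B}_Y)$ with $Y \subseteq X$ and $\mathcal{B}_Y = \{B \in \mathcal{B} : B \subseteq Y\}$ such that any two distinct points of $Y$ lie together in exactly one block of $\mathcal{B}_Y$; it is proper if $Y \ne X$. The dimension of the PBD is the maximum integer $d$ such that every set of $d$ points is contained in a proper flat. *)

theory Defs
  imports Main
begin

definition is_PBD :: "nat \<Rightarrow> nat set \<Rightarrow> 'a set \<Rightarrow> 'a set set \<Rightarrow> bool" where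
  "is_PBD v K X \<B> \<longleftrightarrow> finite X \<and> card X = v \<and>
     (\<forall>B\<in>\<B>. B \<subseteq> X \<and> card B \<in> K) \<and>
     (\<forall>x\<in>X. \<forall>y\<in>X. x \<noteq> y \<longrightarrow> (\<exists>!B. B \<in> \<B> \<and> x \<in> B \<and> y \<in> B))"

definition is_flat :: "'a set \<Rightarrow> 'a set set \<Rightarrow> 'a set \<Rightarrow> bool" where
  "is_flat X \<B> Y \<longleftrightarrow> Y \<subseteq> X \<and>
     (\<forall>x\<in>Y. \<forall>y\<in>Y. x \<noteq> y \<longrightarrow> (\<exists>!B. B \<in> \<B> \<and> B \<subseteq> Y \<and> x \<in> B \<and> y \<in> B))"

definition is_proper_flat :: "'a set \<Rightarrow> 'a set set \<Rightarrow> 'a set \<Rightarrow> bool" where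
  "is_proper_flat X \<B> Y \<longleftrightarrow> is_flat X \<B> Y \<and> Y \<noteq> X"

definition sets_in_proper_flats :: "'a set \<Rightarrow> 'a set set \<Rightarrow> nat \<Rightarrow> bool" where
  "sets_in_proper_flats X \<B> d \<longleftrightarrow>
     (\<forall>S. S \<subseteq> X \<and> card S = d \<longrightarrow> (\<exists>Y. is_proper_flat X \<B> Y \<and> S \<subseteq> Y))"

text \<open>Dimension = maximum d with every d-set of points in a proper flat
  (maximum taken over d with d-sets existing, i.e. d \<le> |X|).\<close>
definition PBD_dimension :: "'a set \<Rightarrow> 'a set set \<Rightarrow> nat" where
  "PBD_dimension X \<B> = (GREATEST d. d \<le> card X \<and> sets_in_proper_flats X \<B> d)"

end

theory Submission
  imports Defs
begin


datatype k4 = K0 | K1 | K2 | K3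

fun kadd :: "k4 \<Rightarrow> k4 \<Rightarrow> k4" where
  "kadd K0 y = y" | "kadd x K0 = x"
| "kadd K1 K1 = K0" | "kadd K1 K2 = K3" | "kadd K1 K3 = K2"
| "kadd K2 K1 = K3" | "kadd K2 K2 = K0" | "kadd K2 K3 = K1"
| "kadd K3 K1 = K2" | "kadd K3 K2 = K1" | "kadd K3 K3 = K0"

fun kmul :: "k4 \<Rightarrow> k4 \<Rightarrow> k4" where
  "kmul K0 y = K0" | "kmul x K0 = K0" | "kmul K1 y = y" | "kmul x K1 = x"
| "kmul K2 K2 = K3" | "kmul K2 K3 = K1" | "kmul K3 K2 = K1" | "kmul K3 K3 = K2"

fun kinv :: "k4 \<Rightarrow> k4" where
  "kinv K0 = K0" | "kinv K1 = K1" | "kinv K2 = K3" | "kinv K3 = K2"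

instantiation k4 :: field
begin
definition "zero_k4 = K0"
definition "one_k4 = K1"
definition "plus_k4 = kadd"
definition "minus_k4 = kadd"
definition "uminus_k4 = (\<lambda>x::k4. x)"
definition "times_k4 = kmul"
definition "inverse_k4 = kinv"
definition "divide_k4 x y = kmul x (kinv y)"
instance
  apply intro_classes
  apply (unfold zero_k4_def one_k4_def plus_k4_def minus_k4_def uminus_k4_def times_k4_def
      inverse_k4_def divide_k4_def)
  subgoal for a b c by (cases a; cases b; cases c; simp)
  subgoal for a b by (cases a; cases b; simp)
  subgoal for a by (cases a; simp)
  subgoal for a b c by (cases a; cases b; cases c; simp)
  subgoal for a b by (cases a; cases b; simp)
  subgoal for a by (cases a; simp)
  subgoal for a by (cases a; simp)
  subgoal by simp
  subgoal for a b c by (cases a; cases b; cases c; simp)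
  subgoal by simp
  subgoal for a by (cases a; simp)
  subgoal by simp
  subgoal by simp
  done
end


lemma k4_UNIV: "(UNIV::k4 set) = {K0,K1,K2,K3}" using k4.exhaust by auto
lemma k4_zero: "(0::k4) = K0" by (simp add: zero_k4_def)
lemma k4_one: "(1::k4) = K1" by (simp add: one_k4_def)
lemma k4_minus: "(x::k4) - y = x + y" by (simp add: minus_k4_def plus_k4_def)

datatype k3 = N1 | N2 | N3
lemma k3_UNIV: "(UNIV::k3 set) = {N1,N2,N3}" using k3.exhaust by auto

fun nz :: "k3 \<Rightarrow> k4" where "nz N1 = K1" | "nz N2 = K2" | "nz N3 = K3"
lemma nz_nonzero[simp]: "nz b \<noteq> 0" by (cases b) (auto simp: k4_zero)
lemma nz_inj[simp]: "nz b = nz b' \<longleftrightarrow> b = b'" by (cases b; cases b') auto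
lemma nz_sub[simp]: "nz b - nz b' = 0 \<longleftrightarrow> b = b'" by simp

lemma lin_det:
  fixes B B' :: "'a::field"
  assumes "B \<noteq> B'" "c = a + q*B" "c' = a + q*B'"
  shows "q = (c - c')/(B - B') \<and> a = c - (c - c')/(B - B') * B"
proof -
  have "c - c' = q * (B - B')" using assms by (simp add: algebra_simps)
  then have "q = (c - c')/(B - B')" using assms(1) by simp
  then show ?thesis using assms by simp
qed

lemma lin_sol:
  fixes B B' :: "'a::field"
  assumes "B \<noteq> B'"
  shows "c = (c - (c - c')/(B - B') * B) + (c - c')/(B - B')*B \<and> c' = (c - (c - c')/(B - B') * B) + (c - c')/(B - B')*B'"
proof -
  define q where "q = (c - c')/(B - B')"
  have "B - B' \<noteq> 0" using assms by simp
  then have h: "q * (B - B') = c - c'" unfolding q_def by simp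
  have "c' = (c - q * B) + q*B'"
  proof -
    have "(c - q * B) + q*B' = c - q * (B - B')" by (simp add: algebra_simps)
    also have "\<dots> = c'" using h by simp
    finally show ?thesis by simp
  qed
  then show ?thesis unfolding q_def[symmetric] by simp
qed


datatype pt = Inf | Pv k4 | Av k3 k4 k4

definition fibP :: "pt set" where "fibP = insert Inf (range Pv)"
definition fibA :: "k3 \<Rightarrow> k4 \<Rightarrow> pt set" where "fibA b c = insert Inf (range (Av b c))"
definition Vb :: "k3 \<Rightarrow> k4 \<Rightarrow> k4 \<Rightarrow> pt set" where
  "Vb b s w = insert (Pv s) (range (\<lambda>c. Av b c (w + s*c)))"
definition Tb :: "k4 \<Rightarrow> k4 \<Rightarrow> k4 \<Rightarrow> k4 \<Rightarrow> pt set" where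
  "Tb a q u t = range (\<lambda>b. Av b (a + q * nz b) (u + t * nz b))"
definition Bs :: "pt set set" where
  "Bs = {fibP} \<union> {fibA b c |b c. True} \<union> {Vb b s w |b s w. True} \<union> {Tb a q u t |a q u t. True}"

lemma mem_fibP[simp]: "Inf \<in> fibP" "Pv g \<in> fibP" "Av b c g \<notin> fibP" by (auto simp: fibP_def)
lemma mem_fibA[simp]: "Inf \<in> fibA b c" "Pv g \<notin> fibA b c" "Av b' c' g \<in> fibA b c \<longleftrightarrow> b' = b \<and> c' = c"
  by (auto simp: fibA_def)
lemma mem_Vb[simp]: "Inf \<notin> Vb b s w" "Pv g \<in> Vb b s w \<longleftrightarrow> g = s" "Av b' c g \<in> Vb b s w \<longleftrightarrow> b' = b \<and> g = w + s*c"
  by (auto simp: Vb_def)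
lemma mem_Tb[simp]: "Inf \<notin> Tb a q u t" "Pv g \<notin> Tb a q u t" "Av b c g \<in> Tb a q u t \<longleftrightarrow> c = a + q * nz b \<and> g = u + t * nz b"
  by (auto simp: Tb_def)

lemma Bs_cases:
  assumes "B \<in> Bs"
  obtains "B = fibP" | b c where "B = fibA b c" | b s w where "B = Vb b s w" | a q u t where "B = Tb a q u t"
  using assms unfolding Bs_def by blast

lemma Bs_intros: "fibP \<in> Bs" "fibA b c \<in> Bs" "Vb b s w \<in> Bs" "Tb a q u t \<in> Bs"
  unfolding Bs_def by blast+

lemma blk_IP: "B \<in> Bs \<Longrightarrow> Inf \<in> B \<Longrightarrow> Pv g \<in> B \<Longrightarrow> B = fibP"
  by (erule Bs_cases) auto
lemma blk_IA: "B \<in> Bs \<Longrightarrow> Inf \<in> B \<Longrightarrow> Av b c g \<in> B \<Longrightarrow> B = fibA b c"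
  by (erule Bs_cases) auto
lemma blk_PP: "B \<in> Bs \<Longrightarrow> Pv g \<in> B \<Longrightarrow> Pv g' \<in> B \<Longrightarrow> g \<noteq> g' \<Longrightarrow> B = fibP"
  by (erule Bs_cases) auto
lemma blk_PA: "B \<in> Bs \<Longrightarrow> Pv g \<in> B \<Longrightarrow> Av b c h \<in> B \<Longrightarrow> B = Vb b g (h - g*c)"
  by (erule Bs_cases) auto
lemma blk_AA1: "B \<in> Bs \<Longrightarrow> Av b c g \<in> B \<Longrightarrow> Av b c g' \<in> B \<Longrightarrow> g \<noteq> g' \<Longrightarrow> B = fibA b c"
  by (erule Bs_cases) auto
lemma blk_AA2: "B \<in> Bs \<Longrightarrow> Av b c g \<in> B \<Longrightarrow> Av b c' g' \<in> B \<Longrightarrow> c \<noteq> c' \<Longrightarrow>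
   B = Vb b ((g - g')/(c - c')) (g - (g - g')/(c - c') * c)"
proof (erule Bs_cases)
  fix b0 s w assume B: "B = Vb b0 s w" and "Av b c g \<in> B" "Av b c' g' \<in> B" "c \<noteq> c'"
  then have "g = w + s*c" "g' = w + s*c'" "b = b0" by auto
  with lin_det[OF \<open>c \<noteq> c'\<close>] have "s = (g - g')/(c - c') \<and> w = g - (g - g')/(c - c') * c"
    by (metis add.commute mult.commute)
  then show ?thesis using B \<open>b = b0\<close> by simp
qed auto
lemma blk_AA3: "B \<in> Bs \<Longrightarrow> Av b c g \<in> B \<Longrightarrow> Av b' c' g' \<in> B \<Longrightarrow> b \<noteq> b' \<Longrightarrow>
   B = Tb (c - (c - c')/(nz b - nz b') * nz b) ((c - c')/(nz b - nz b'))
          (g - (g - g')/(nz b - nz b') * nz b) ((g - g')/(nz b - nz b'))"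
proof (erule Bs_cases)
  fix a q u t assume B: "B = Tb a q u t" and "Av b c g \<in> B" "Av b' c' g' \<in> B" "b \<noteq> b'"
  then have e: "c = a + q * nz b" "c' = a + q * nz b'" "g = u + t * nz b" "g' = u + t * nz b'" by auto
  have ne: "nz b \<noteq> nz b'" using \<open>b \<noteq> b'\<close> by simp
  from lin_det[OF ne e(1,2)] lin_det[OF ne e(3,4)] show ?thesis using B by simp
qed auto


lemma ex1_blk: "W \<in> Bs \<Longrightarrow> x \<in> W \<Longrightarrow> y \<in> W \<Longrightarrow> (\<And>B. B \<in> Bs \<Longrightarrow> x \<in> B \<Longrightarrow> y \<in> B \<Longrightarrow> B = W)
   \<Longrightarrow> \<exists>!B. B \<in> Bs \<and> x \<in> B \<and> y \<in> B"
  by blast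

lemma ex1_AA: "(x::pt) \<noteq> y \<Longrightarrow> x = Av b c g \<Longrightarrow> y = Av b' c' g' \<Longrightarrow> \<exists>!B. B \<in> Bs \<and> x \<in> B \<and> y \<in> B"
proof -
  assume xy: "x \<noteq> y" "x = Av b c g" "y = Av b' c' g'"
  consider "b = b'" "c = c'" "g \<noteq> g'" | "b = b'" "c \<noteq> c'" | "b \<noteq> b'" using xy by auto
  then show ?thesis
  proof cases
    case 1 then show ?thesis using xy
      apply (intro ex1_blk[of "fibA b c"])
      apply (rule Bs_intros)
      apply simp
      apply simp
      subgoal for B using blk_AA1[of B b c g g'] by simp
      done
  next
    case 2
    note L = lin_sol[OF \<open>c \<noteq> c'\<close>, of g g']
    show ?thesis using xy 2
      apply (intro ex1_blk[of "Vb b ((g - g')/(c - c')) (g - (g - g')/(c - c') * c)"])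
      apply (rule Bs_intros)
      subgoal using L by simp
      subgoal using L by simp
      subgoal for B using blk_AA2[of B b c g c' g'] by simp
      done
  next
    case 3
    have ne: "nz b \<noteq> nz b'" using 3 by simp
    note L1 = lin_sol[OF ne, of c c'] and L2 = lin_sol[OF ne, of g g']
    show ?thesis using xy 3
      apply (intro ex1_blk[of "Tb (c - (c - c')/(nz b - nz b') * nz b) ((c - c')/(nz b - nz b'))
          (g - (g - g')/(nz b - nz b') * nz b) ((g - g')/(nz b - nz b'))"])
      apply (rule Bs_intros)
      subgoal using L1 L2 by simp
      subgoal using L1 L2 by simp
      subgoal for B using blk_AA3[of B b c g b' c' g'] by simp
      done
  qed
qed

lemma pbd_unique: assumes xy: "(x::pt) \<noteq> y" shows "\<exists>!B. B \<in> Bs \<and> x \<in> B \<and> y \<in> B"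
  using xy
proof (cases x)
  case Inf then show ?thesis
  proof (cases y)
    case (Pv g) then show ?thesis using Inf
      by (intro ex1_blk[of fibP]) (simp_all add: Bs_intros blk_IP)
  next
    case (Av b c g) then show ?thesis using Inf
      by (intro ex1_blk[of "fibA b c"]) (simp_all add: Bs_intros blk_IA)
  qed (use Inf xy in auto)
next
  case (Pv g) then show ?thesis
  proof (cases y)
    case Inf then show ?thesis using Pv by (intro ex1_blk[of fibP]) (simp_all add: Bs_intros blk_IP)
  next
    case (Pv g') then show ?thesis using \<open>x = Pv g\<close> \<open>x \<noteq> y\<close>
      by (intro ex1_blk[of fibP]) (simp_all add: Bs_intros blk_PP)
  next
    case (Av b c h) then show ?thesis using Pv
      by (intro ex1_blk[of "Vb b g (h - g*c)"]) (simp_all add: Bs_intros blk_PA)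
  qed
next
  case (Av b c g) then show ?thesis
  proof (cases y)
    case Inf then show ?thesis using Av by (intro ex1_blk[of "fibA b c"]) (simp_all add: Bs_intros blk_IA)
  next
    case (Pv h) then show ?thesis using Av
      by (intro ex1_blk[of "Vb b h (g - h*c)"]) (simp_all add: Bs_intros blk_PA)
  next
    case (Av b' c' g') then show ?thesis using \<open>x = Av b c g\<close> \<open>x \<noteq> y\<close> by (intro ex1_AA) auto
  qed
qed


definition allpts :: "pt list" where "allpts = [Inf,Pv K0,Pv K1,Pv K2,Pv K3,Av N1 K0 K0,Av N1 K0 K1,Av N1 K0 K2,Av N1 K0 K3,Av N1 K1 K0,Av N1 K1 K1,Av N1 K1 K2,Av N1 K1 K3,Av N1 K2 K0,Av N1 K2 K1,Av N1 K2 K2,Av N1 K2 K3,Av N1 K3 K0,Av N1 K3 K1,Av N1 K3 K2,Av N1 K3 K3,Av N2 K0 K0,Av N2 K0 K1,Av N2 K0 K2,Av N2 K0 K3,Av N2 K1 K0,Av N2 K1 K1,Av N2 K1 K2,Av N2 K1 K3,Av N2 K2 K0,Av N2 K2 K1,Av N2 K2 K2,Av N2 K2 K3,Av N2 K3 K0,Av N2 K3 K1,Av N2 K3 K2,Av N2 K3 K3,Av N3 K0 K0,Av N3 K0 K1,Av N3 K0 K2,Av N3 K0 K3,Av N3 K1 K0,Av N3 K1 K1,Av N3 K1 K2,Av N3 K1 K3,Av N3 K2 K0,Av N3 K2 K1,Av N3 K2 K2,Av N3 K2 K3,Av N3 K3 K0,Av N3 K3 K1,Av N3 K3 K2,Av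 N3 K3 K3]"

lemma UNIV_pt: "(UNIV::pt set) = set allpts"
proof -
  have "x \<in> set allpts" for x
    proof (cases x)
    case (Pv g) then show ?thesis by (cases g) (simp_all add: allpts_def)
  next
    case (Av b c g) then show ?thesis by (cases b; cases c; cases g) (simp_all add: allpts_def)
  qed (simp add: allpts_def)
  then show ?thesis by auto
qed

lemma finite_pt: "finite (UNIV::pt set)" unfolding UNIV_pt by simp
lemma card_pt: "card (UNIV::pt set) = 53"
  unfolding UNIV_pt by (subst distinct_card) (simp_all add: allpts_def)

lemma card_blocks: "B \<in> Bs \<Longrightarrow> card B \<in> {3,5}"
  by (erule Bs_cases) (simp_all add: fibP_def fibA_def Vb_def Tb_def k4_UNIV k3_UNIV)

lemma pbd_pt: "is_PBD 53 {3,5} (UNIV::pt set) Bs"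
  unfolding is_PBD_def using finite_pt card_pt card_blocks pbd_unique by blast





lemma lin_eq:
  fixes B B' :: "'a::field"
  assumes "B \<noteq> B'" "a + q*B = a' + q'*B" "a + q*B' = a' + q'*B'"
  shows "a = a' \<and> q = q'"
proof -
  have e: "(a + q*B) - (a + q*B') = (a' + q'*B) - (a' + q'*B')" using assms(2,3) by simp
  have "(q - q') * (B - B') = (q*B - q*B') - (q'*B - q'*B')" by (simp add: algebra_simps)
  also have "\<dots> = 0" using e by simp
  finally have "(q - q') * (B - B') = 0" .
  then have "q = q'" using assms(1) by simp
  then show ?thesis using assms(2) by simp
qed

lemma lin_ex:
  fixes B B' :: "'a::field"
  assumes "B \<noteq> B'" shows "\<exists>a q. c = a + q*B \<and> c' = a + q*B'"
  using lin_sol[OF assms] by blast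

definition closed :: "pt set \<Rightarrow> bool" where
  "closed F \<longleftrightarrow> (\<forall>B\<in>Bs. \<forall>x y. x \<in> B \<longrightarrow> y \<in> B \<longrightarrow> x \<noteq> y \<longrightarrow> x \<in> F \<longrightarrow> y \<in> F \<longrightarrow> B \<subseteq> F)"

lemma closedI:
  assumes "\<And>B x y. B \<in> Bs \<Longrightarrow> x \<in> B \<Longrightarrow> y \<in> B \<Longrightarrow> x \<noteq> y \<Longrightarrow> x \<in> F \<Longrightarrow> y \<in> F \<Longrightarrow> B \<subseteq> F"
  shows "closed F" using assms unfolding closed_def by blast

lemma closed_flat: assumes "closed F" shows "is_flat UNIV Bs F"
  unfolding is_flat_def
proof (intro conjI ballI impI)
  fix x y assume xy: "x \<in> F" "y \<in> F" "x \<noteq> y"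
  from pbd_unique[OF xy(3)] obtain B where B: "B \<in> Bs" "x \<in> B" "y \<in> B"
    and u: "\<And>B'. B' \<in> Bs \<and> x \<in> B' \<and> y \<in> B' \<Longrightarrow> B' = B" by blast
  have "B \<subseteq> F" using assms B xy unfolding closed_def by blast
  then show "\<exists>!B. B \<in> Bs \<and> B \<subseteq> F \<and> x \<in> B \<and> y \<in> B"
  proof (intro ex1I[of _ B])
    fix B' assume "B' \<in> Bs \<and> B' \<subseteq> F \<and> x \<in> B' \<and> y \<in> B'"
    then show "B' = B" using u by simp
  qed (use B in simp)
qed simp

lemma flat_closed: assumes "is_flat UNIV Bs F" shows "closed F"
proof (rule closedI)
  fix B x y assume B: "B \<in> Bs" "x \<in> B" "y \<in> B" "x \<noteq> y" "x \<in> F" "y \<in> F"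
  from assms B obtain B' where B': "B' \<in> Bs" "B' \<subseteq> F" "x \<in> B'" "y \<in> B'"
    unfolding is_flat_def by blast
  from pbd_unique[OF B(4)] B B' have "B = B'" by blast
  then show "B \<subseteq> F" using B' by simp
qed

definition SC :: "k4 \<Rightarrow> k4 \<Rightarrow> k4 \<Rightarrow> pt set" where
  "SC v1 v2 v3 = insert (Pv v3) (range (\<lambda>(b,c). Av b c (v1 + v2 * nz b + v3 * c)))"
definition VP :: "k3 \<Rightarrow> pt set" where
  "VP b0 = insert Inf (range Pv \<union> range (\<lambda>(c,g). Av b0 c g))"
definition VT :: "k4 \<Rightarrow> k4 \<Rightarrow> pt set" where
  "VT a q = insert Inf (range (\<lambda>(b,g). Av b (a + q * nz b) g))"

lemma mem_SC[simp]: "Inf \<notin> SC v1 v2 v3" "Pv g \<in> SC v1 v2 v3 \<longleftrightarrow> g = v3"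
  "Av b c g \<in> SC v1 v2 v3 \<longleftrightarrow> g = v1 + v2 * nz b + v3 * c"
  by (auto simp: SC_def)
lemma mem_VP[simp]: "Inf \<in> VP b0" "Pv g \<in> VP b0" "Av b c g \<in> VP b0 \<longleftrightarrow> b = b0"
  by (auto simp: VP_def)
lemma mem_VT[simp]: "Inf \<in> VT a q" "Pv g \<notin> VT a q" "Av b c g \<in> VT a q \<longleftrightarrow> c = a + q * nz b"
  by (auto simp: VT_def)


lemma closed_SC: "closed (SC v1 v2 v3)"
proof (rule closedI)
  fix B x y assume B: "B \<in> Bs" and xy: "x \<in> B" "y \<in> B" "x \<noteq> y" "x \<in> SC v1 v2 v3" "y \<in> SC v1 v2 v3"
  from B show "B \<subseteq> SC v1 v2 v3"
  proof (cases rule: Bs_cases)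
    case 1 then show ?thesis using xy by (cases x; cases y) auto
  next
    case (2 b c) then show ?thesis using xy by (cases x; cases y) auto
  next
    case (3 b0 s w)
    have key: "s = v3 \<and> w = v1 + v2 * nz b0"
    proof (cases x)
      case Inf then show ?thesis using xy 3 by simp
    next
      case (Pv g) then show ?thesis using xy 3 by (cases y) auto
    next
      case (Av b c g)
      show ?thesis
      proof (cases y)
        case Inf then show ?thesis using xy 3 by simp
      next
        case (Pv g') then show ?thesis using xy 3 Av by auto
      next
        case (Av b' c' g')
        have e: "b = b0" "b' = b0" "g = w + s*c" "g' = w + s*c'"
          "g = (v1 + v2 * nz b) + v3 * c" "g' = (v1 + v2 * nz b') + v3 * c'"
          using xy 3 Av \<open>x = Av b c g\<close> by auto
        have "c \<noteq> c'" using e xy Av \<open>x = Av b c g\<close> by auto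
        from lin_eq[OF this, of w s "v1 + v2 * nz b0" v3] e show ?thesis by simp
      qed
    qed
    show ?thesis
    proof
      fix z assume "z \<in> B" then show "z \<in> SC v1 v2 v3" using 3 key by (cases z) (auto simp: algebra_simps)
    qed
  next
    case (4 a q u t)
    obtain b1 c1 g1 b2 c2 g2 where x: "x = Av b1 c1 g1" and y: "y = Av b2 c2 g2"
      using xy 4 by (cases x; cases y) auto
    have e: "c1 = a + q * nz b1" "g1 = u + t * nz b1" "c2 = a + q * nz b2" "g2 = u + t * nz b2"
      "g1 = v1 + v2 * nz b1 + v3 * c1" "g2 = v1 + v2 * nz b2 + v3 * c2"
      using xy 4 x y by auto
    have "b1 \<noteq> b2" using e xy x y by auto
    then have ne: "nz b1 \<noteq> nz b2" by simp
    have "u + t * nz b1 = (v1 + v3 * a) + (v2 + v3 * q) * nz b1"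
      "u + t * nz b2 = (v1 + v3 * a) + (v2 + v3 * q) * nz b2"
      using e by (simp_all add: algebra_simps)
    from lin_eq[OF ne this] have key: "u = v1 + v3 * a" "t = v2 + v3 * q" by auto
    show ?thesis
    proof
      fix z assume "z \<in> B" then show "z \<in> SC v1 v2 v3" using 4 key by (cases z) (auto simp: algebra_simps)
    qed
  qed
qed

lemma closed_VP: "closed (VP b0)"
proof (rule closedI)
  fix B x y assume B: "B \<in> Bs" and xy: "x \<in> B" "y \<in> B" "x \<noteq> y" "x \<in> VP b0" "y \<in> VP b0"
  from B show "B \<subseteq> VP b0"
  proof (cases rule: Bs_cases)
    case 1 then show ?thesis by (auto simp: fibP_def)
  next
    case (2 b c)
    have "b = b0" using xy 2 by (cases x; cases y) auto
    then show ?thesis using 2 by (auto simp: fibA_def)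
  next
    case (3 b s w)
    have "b = b0" using xy 3 by (cases x; cases y) auto
    then show ?thesis using 3 by (auto simp: Vb_def)
  next
    case (4 a q u t)
    show ?thesis using xy 4 by (cases x; cases y) auto
  qed
qed

lemma closed_VT: "closed (VT a q)"
proof (rule closedI)
  fix B x y assume B: "B \<in> Bs" and xy: "x \<in> B" "y \<in> B" "x \<noteq> y" "x \<in> VT a q" "y \<in> VT a q"
  from B show "B \<subseteq> VT a q"
  proof (cases rule: Bs_cases)
    case 1 then show ?thesis using xy by (cases x; cases y) auto
  next
    case (2 b c)
    have "c = a + q * nz b" using xy 2 by (cases x; cases y) auto
    then show ?thesis using 2 by (auto simp: fibA_def)
  next
    case (3 b s w)
    show ?thesis using xy 3 by (cases x; cases y) auto
  next
    case (4 a' q' u t)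
    obtain b1 c1 g1 b2 c2 g2 where x: "x = Av b1 c1 g1" and y: "y = Av b2 c2 g2"
      using xy 4 by (cases x; cases y) auto
    have e: "c1 = a' + q' * nz b1" "c2 = a' + q' * nz b2" "c1 = a + q * nz b1" "c2 = a + q * nz b2"
      using xy 4 x y by auto
    have "b1 \<noteq> b2" using e xy x y 4 by auto
    then have ne: "nz b1 \<noteq> nz b2" by simp
    from lin_eq[OF ne, of a' q' a q] e have "a' = a" "q' = q" by auto
    then show ?thesis using 4 by (auto simp: Tb_def)
  qed
qed


definition good :: "pt set \<Rightarrow> bool" where "good F \<longleftrightarrow> closed F \<and> F \<noteq> UNIV"
definition P3 :: "pt \<Rightarrow> pt \<Rightarrow> pt \<Rightarrow> bool" where
  "P3 x y z \<longleftrightarrow> (\<exists>F. good F \<and> x \<in> F \<and> y \<in> F \<and> z \<in> F)"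

lemma P3I: "good F \<Longrightarrow> x \<in> F \<Longrightarrow> y \<in> F \<Longrightarrow> z \<in> F \<Longrightarrow> P3 x y z"
  unfolding P3_def by blast
lemma P3_12: "P3 x y z \<Longrightarrow> P3 y x z" unfolding P3_def by blast
lemma P3_23: "P3 x y z \<Longrightarrow> P3 x z y" unfolding P3_def by blast

lemma k4_one_ne: "(v::k4) + 1 \<noteq> v" by (cases v) (simp_all add: k4_one plus_k4_def)

lemma good_SC: "good (SC v1 v2 v3)"
proof -
  have "Pv (v3 + 1) \<notin> SC v1 v2 v3" using k4_one_ne by simp
  then show ?thesis unfolding good_def using closed_SC by blast
qed
lemma good_VP: "good (VP b0)"
proof -
  have "Av (if b0 = N1 then N2 else N1) 0 0 \<notin> VP b0" by simp
  then show ?thesis unfolding good_def using closed_VP by blast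
qed
lemma good_VT: "good (VT a q)"
  unfolding good_def using closed_VT mem_VT(2) by blast

lemma VP_P3: "x \<in> VP b0 \<Longrightarrow> y \<in> VP b0 \<Longrightarrow> z \<in> VP b0 \<Longrightarrow> P3 x y z"
  using P3I[OF good_VP] .

lemma vert2: "P3 Inf y z"
proof (cases "\<exists>b c g b' c' g'. y = Av b c g \<and> z = Av b' c' g' \<and> b \<noteq> b'")
  case True
  then obtain b c g b' c' g' where yz: "y = Av b c g" "z = Av b' c' g'" "b \<noteq> b'" by blast
  then have "nz b \<noteq> nz b'" by simp
  from lin_ex[OF this, of c c'] obtain a q where "c = a + q * nz b" "c' = a + q * nz b'" by blast
  then show ?thesis using yz by (intro P3I[OF good_VT[of a q]]) auto
next
  case False
  define b0 where "b0 = (case y of Av b _ _ \<Rightarrow> b | _ \<Rightarrow> (case z of Av b _ _ \<Rightarrow> b | _ \<Rightarrow> N1))"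
  have "y \<in> VP b0" "z \<in> VP b0" using False unfolding b0_def
    by (cases y; cases z; auto)+
  then show ?thesis by (intro VP_P3) auto
qed

lemma H_P1: "b1 \<noteq> b2 \<Longrightarrow> P3 (Pv s) (Av b1 c1 g1) (Av b2 c2 g2)"
proof -
  assume "b1 \<noteq> b2"
  then have "nz b1 \<noteq> nz b2" by simp
  from lin_ex[OF this, of "g1 - s*c1" "g2 - s*c2"] obtain u t where
    e: "g1 - s*c1 = u + t * nz b1" "g2 - s*c2 = u + t * nz b2" by blast
  have "g1 = u + t * nz b1 + s * c1" "g2 = u + t * nz b2 + s * c2"
    using e by (simp_all add: algebra_simps eq_diff_eq)
  then show ?thesis by (intro P3I[OF good_SC[of u t s]]) auto
qed

lemma H_AA2: "b1 \<noteq> b3 \<Longrightarrow> P3 (Av b1 c1 g1) (Av b1 c2 g2) (Av b3 c3 g3)"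
proof -
  assume b: "b1 \<noteq> b3"
  then have ne: "nz b1 \<noteq> nz b3" by simp
  show ?thesis
  proof (cases "c1 = c2")
    case True
    from lin_ex[OF ne, of c1 c3] obtain a q where "c1 = a + q * nz b1" "c3 = a + q * nz b3" by blast
    then show ?thesis using True by (intro P3I[OF good_VT[of a q]]) auto
  next
    case False
    define v3 where "v3 = (g1 - g2)/(c1 - c2)"
    define w where "w = g1 - v3 * c1"
    have L: "g1 = w + v3 * c1 \<and> g2 = w + v3 * c2" using lin_sol[OF False, of g1 g2]
      unfolding v3_def w_def by simp
    from lin_ex[OF ne, of w "g3 - v3*c3"] obtain u t where
      e: "w = u + t * nz b1" "g3 - v3*c3 = u + t * nz b3" by blast
    have "g1 = u + t * nz b1 + v3 * c1" "g2 = u + t * nz b1 + v3 * c2" "g3 = u + t * nz b3 + v3 * c3"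
      using e L by (simp_all add: algebra_simps eq_diff_eq)
    then show ?thesis by (intro P3I[OF good_SC[of u t v3]]) auto
  qed
qed

lemma sec3:
  fixes B1 :: "'a::field"
  assumes "c1 = a + q*B1" "c2 = a + q*B2" "c3 \<noteq> a + q*B3" "g1 = u + t*B1" "g2 = u + t*B2"
  shows "\<exists>v1 v2 v3. g1 = v1 + v2*B1 + v3*c1 \<and> g2 = v1 + v2*B2 + v3*c2 \<and> g3 = v1 + v2*B3 + v3*c3"
proof -
  define D where "D = c3 - (a + q*B3)"
  have D: "D \<noteq> 0" using assms(3) unfolding D_def by simp
  define v3 where "v3 = (g3 - (u + t*B3)) / D"
  have v3D: "v3 * D = g3 - (u + t*B3)" using D unfolding v3_def by simp
  have "g1 = (u - v3*a) + (t - v3*q)*B1 + v3*c1" using assms(1,4) by (simp add: algebra_simps)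
  moreover have "g2 = (u - v3*a) + (t - v3*q)*B2 + v3*c2" using assms(2,5) by (simp add: algebra_simps)
  moreover have "g3 = (u - v3*a) + (t - v3*q)*B3 + v3*c3"
  proof -
    have "(u - v3*a) + (t - v3*q)*B3 + v3*c3 = u + t*B3 + v3 * D" unfolding D_def by (simp add: algebra_simps)
    then show ?thesis using v3D by simp
  qed
  ultimately show ?thesis by blast
qed

lemma H_AAA: "b1 \<noteq> b2 \<Longrightarrow> b1 \<noteq> b3 \<Longrightarrow> b2 \<noteq> b3 \<Longrightarrow> P3 (Av b1 c1 g1) (Av b2 c2 g2) (Av b3 c3 g3)"
proof -
  assume b: "b1 \<noteq> b2" "b1 \<noteq> b3" "b2 \<noteq> b3"
  then have ne: "nz b1 \<noteq> nz b2" by simp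
  from lin_ex[OF ne, of c1 c2] obtain a q where c: "c1 = a + q * nz b1" "c2 = a + q * nz b2" by blast
  show ?thesis
  proof (cases "c3 = a + q * nz b3")
    case True then show ?thesis using c by (intro P3I[OF good_VT[of a q]]) auto
  next
    case False
    from lin_ex[OF ne, of g1 g2] obtain u t where g: "g1 = u + t * nz b1" "g2 = u + t * nz b2" by blast
    from sec3[OF c False g, of g3] obtain v1 v2 v3 where
      "g1 = v1 + v2 * nz b1 + v3 * c1" "g2 = v1 + v2 * nz b2 + v3 * c2" "g3 = v1 + v2 * nz b3 + v3 * c3"
      by blast
    then show ?thesis by (intro P3I[OF good_SC[of v1 v2 v3]]) auto
  qed
qed


lemma P3_perms: "P3 x y z \<Longrightarrow> P3 y z x" "P3 x y z \<Longrightarrow> P3 z x y"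
  using P3_12 P3_23 by blast+

lemma P3_noInf_P: "P3 (Pv s) y z"
proof (cases y)
  case Inf then show ?thesis using vert2 P3_12 by blast
next
  case (Pv s') then show ?thesis
  proof (cases z)
    case Inf then show ?thesis using vert2 P3_perms by blast
  next
    case (Av b c g) then show ?thesis using Pv by (intro VP_P3[of _ b]) auto
  qed (use Pv in \<open>auto intro: VP_P3[of _ N1]\<close>)
next
  case (Av b1 c1 g1) then show ?thesis
  proof (cases z)
    case Inf then show ?thesis using vert2 P3_perms by blast
  next
    case (Pv s') then show ?thesis using Av by (intro VP_P3[of _ b1]) auto
  next
    case (Av b2 c2 g2)
    show ?thesis
    proof (cases "b1 = b2")
      case True then show ?thesis using Av \<open>y = Av b1 c1 g1\<close> by (intro VP_P3[of _ b1]) auto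
    next
      case False then show ?thesis using Av \<open>y = Av b1 c1 g1\<close> H_P1 by simp
    qed
  qed
qed

lemma P3_AAA: "P3 (Av b1 c1 g1) (Av b2 c2 g2) (Av b3 c3 g3)"
proof -
  consider "b1 = b2" "b2 = b3" | "b1 = b2" "b1 \<noteq> b3" | "b1 = b3" "b1 \<noteq> b2" | "b2 = b3" "b1 \<noteq> b2"
    | "b1 \<noteq> b2" "b1 \<noteq> b3" "b2 \<noteq> b3" by blast
  then show ?thesis
  proof cases
    case 1 then show ?thesis by (intro VP_P3[of _ b1]) auto
  next
    case 2 then show ?thesis using H_AA2 by simp
  next
    case 3 then show ?thesis using H_AA2[of b1 b2 c1 g1 c3 g3 c2 g2] P3_23 by simp
  next
    case 4
    then have "P3 (Av b2 c2 g2) (Av b2 c3 g3) (Av b1 c1 g1)" using H_AA2[of b2 b1 c2 g2 c3 g3 c1 g1] by simp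
    from P3_perms(2)[OF this] show ?thesis using 4 by simp
  next
    case 5 then show ?thesis using H_AAA by simp
  qed
qed

lemma P3_all: "P3 x y z"
proof (cases x)
  case Inf then show ?thesis using vert2 by simp
next
  case (Pv s) then show ?thesis using P3_noInf_P by simp
next
  case (Av b1 c1 g1) show ?thesis
  proof (cases y)
    case Inf then show ?thesis using vert2 P3_12 by blast
  next
    case (Pv s) then show ?thesis using P3_noInf_P P3_12 by blast
  next
    case (Av b2 c2 g2) show ?thesis
    proof (cases z)
      case Inf then show ?thesis using vert2 P3_perms by blast
    next
      case (Pv s) then show ?thesis using P3_noInf_P P3_perms by blast
    next
      case (Av b3 c3 g3) then show ?thesis using \<open>x = Av b1 c1 g1\<close> \<open>y = Av b2 c2 g2\<close> P3_AAA by simp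
    qed
  qed
qed


lemma cl: "closed F \<Longrightarrow> B \<in> Bs \<Longrightarrow> x \<in> B \<Longrightarrow> y \<in> B \<Longrightarrow> x \<noteq> y \<Longrightarrow> x \<in> F \<Longrightarrow> y \<in> F \<Longrightarrow> z \<in> B \<Longrightarrow> z \<in> F"
  unfolding closed_def by blast

lemma gen4:
  assumes F: "closed F" and S: "Inf \<in> F" "Pv 0 \<in> F" "Av N1 0 0 \<in> F" "Av N2 0 0 \<in> F"
  shows "F = UNIV"
proof -
  have P: "Pv g \<in> F" for g
    by (rule cl[OF F Bs_intros(1), of Inf "Pv 0"]) (use S in auto)
  have A0: "Av b 0 g \<in> F" if "b = N1 \<or> b = N2" for b g
    using that
  proof
    assume b: "b = N1" show ?thesis unfolding b by (rule cl[OF F Bs_intros(2)[of N1 0], of Inf "Av N1 0 0"]) (use S in auto)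
  next
    assume b: "b = N2" show ?thesis unfolding b by (rule cl[OF F Bs_intros(2)[of N2 0], of Inf "Av N2 0 0"]) (use S in auto)
  qed
  have A12: "Av b c g \<in> F" if "b = N1 \<or> b = N2" for b c g
  proof (cases "c = 0")
    case True then show ?thesis using A0 that by simp
  next
    case False
    define s where "s = g / c"
    have "g = 0 + s * c" using False unfolding s_def by simp
    moreover have "Av b c (0 + s*c) \<in> F"
      by (rule cl[OF F Bs_intros(3)[of b s 0], of "Pv s" "Av b 0 (0 + s*0)"]) (use A0 P that in auto)
    ultimately show ?thesis by simp
  qed
  have A3: "Av N3 c g \<in> F" for c g
  proof -
    have "Av N3 (c + 0 * nz N3) (g + 0 * nz N3) \<in> F"
      by (rule cl[OF F Bs_intros(4)[of c 0 g 0], of "Av N1 (c + 0 * nz N1) (g + 0 * nz N1)" "Av N2 (c + 0 * nz N2) (g + 0 * nz N2)"])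
        (use A12 in auto)
    then show ?thesis by simp
  qed
  have "x \<in> F" for x
  proof (cases x)
    case (Av b c g) then show ?thesis using A12 A3 by (cases b) auto
  qed (use S P in auto)
  then show ?thesis by auto
qed


fun k4n :: "k4 \<Rightarrow> nat" where "k4n K0 = 0" | "k4n K1 = 1" | "k4n K2 = 2" | "k4n K3 = 3"
fun k3n :: "k3 \<Rightarrow> nat" where "k3n N1 = 0" | "k3n N2 = 1" | "k3n N3 = 2"
fun enc :: "pt \<Rightarrow> nat" where
  "enc Inf = 0" | "enc (Pv g) = 1 + k4n g" | "enc (Av b c g) = 5 + 16 * k3n b + 4 * k4n c + k4n g"

lemma dec_enc: "allpts ! enc x = x"
proof (cases x)
  case (Pv g) then show ?thesis by (cases g) (simp_all add: allpts_def)
next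
  case (Av b c g) then show ?thesis by (cases b; cases c; cases g) (simp_all add: allpts_def)
qed (simp add: allpts_def)

lemma inj_enc: "inj enc"
  by (rule inj_on_inverseI[of _ "\<lambda>n. allpts ! n"]) (rule dec_enc)

lemma ex1_image:
  assumes "inj g" shows "(\<exists>!y. y \<in> g ` A \<and> Q y) \<longleftrightarrow> (\<exists>!x. x \<in> A \<and> Q (g x))"
proof
  assume "\<exists>!y. y \<in> g ` A \<and> Q y"
  then obtain y where y: "y \<in> g ` A" "Q y" and u: "\<And>y'. y' \<in> g ` A \<and> Q y' \<Longrightarrow> y' = y" by blast
  from y obtain x where x: "x \<in> A" "y = g x" by blast
  show "\<exists>!x. x \<in> A \<and> Q (g x)"
  proof (rule ex1I[of _ x])
    show "x \<in> A \<and> Q (g x)" using x y by simp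
    fix x' assume "x' \<in> A \<and> Q (g x')"
    then have "g x' = g x" using u x by blast
    then show "x' = x" using assms by (simp add: inj_eq)
  qed
next
  assume "\<exists>!x. x \<in> A \<and> Q (g x)"
  then obtain x where x: "x \<in> A" "Q (g x)" and u: "\<And>x'. x' \<in> A \<and> Q (g x') \<Longrightarrow> x' = x" by blast
  show "\<exists>!y. y \<in> g ` A \<and> Q y"
  proof (rule ex1I[of _ "g x"])
    show "g x \<in> g ` A \<and> Q (g x)" using x by simp
    fix y assume "y \<in> g ` A \<and> Q y"
    then show "y = g x" using u by blast
  qed
qed

lemma inj_imageI: "inj f \<Longrightarrow> inj (image f)"
  by (rule injI) (simp add: inj_image_eq_iff)

lemma pbd_transfer:
  assumes f: "inj f" and P: "is_PBD v K X \<B>"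
  shows "is_PBD v K (f ` X) (image f ` \<B>)"
proof -
  have fi: "inj (image f)" using inj_imageI[OF f] .
  have "\<forall>x\<in>X. \<forall>y\<in>X. x \<noteq> y \<longrightarrow> (\<exists>!B. B \<in> \<B> \<and> x \<in> B \<and> y \<in> B)" using P unfolding is_PBD_def by blast
  then have U: "\<forall>x\<in>X. \<forall>y\<in>X. f x \<noteq> f y \<longrightarrow> (\<exists>!B'. B' \<in> image f ` \<B> \<and> f x \<in> B' \<and> f y \<in> B')"
    by (simp add: ex1_image[OF fi] inj_image_mem_iff[OF f] inj_eq[OF f])
  have C: "\<forall>B\<in>\<B>. B \<subseteq> X \<and> card B \<in> K" using P unfolding is_PBD_def by blast
  have "\<forall>B'\<in>image f ` \<B>. B' \<subseteq> f ` X \<and> card B' \<in> K"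
    using C by (auto simp: card_image[OF inj_on_subset[OF f]])
  moreover have "finite (f ` X)" "card (f ` X) = v"
    using P card_image[OF inj_on_subset[OF f]] unfolding is_PBD_def by auto
  moreover have "\<forall>x'\<in>f ` X. \<forall>y'\<in>f ` X. x' \<noteq> y' \<longrightarrow> (\<exists>!B'. B' \<in> image f ` \<B> \<and> x' \<in> B' \<and> y' \<in> B')"
  proof (intro ballI impI)
    fix x' y' assume "x' \<in> f ` X" "y' \<in> f ` X" "x' \<noteq> y'"
    then obtain x y where "x \<in> X" "y \<in> X" "x' = f x" "y' = f y" by blast
    then show "\<exists>!B'. B' \<in> image f ` \<B> \<and> x' \<in> B' \<and> y' \<in> B'"
      using U \<open>x' \<noteq> y'\<close> by simp
  qed
  ultimately show ?thesis unfolding is_PBD_def by (intro conjI)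
qed

lemma flat_transfer:
  assumes f: "inj f"
  shows "is_flat (f ` X) (image f ` \<B>) (f ` Y) \<longleftrightarrow> is_flat X \<B> Y"
proof -
  have fi: "inj (image f)" using inj_imageI[OF f] .
  have "(\<forall>x'\<in>f ` Y. \<forall>y'\<in>f ` Y. x' \<noteq> y' \<longrightarrow> (\<exists>!B'. B' \<in> image f ` \<B> \<and> B' \<subseteq> f ` Y \<and> x' \<in> B' \<and> y' \<in> B'))
     \<longleftrightarrow> (\<forall>x\<in>Y. \<forall>y\<in>Y. x \<noteq> y \<longrightarrow> (\<exists>!B. B \<in> \<B> \<and> B \<subseteq> Y \<and> x \<in> B \<and> y \<in> B))"
    by (simp add: ex1_image[OF fi] inj_image_mem_iff[OF f] inj_image_subset_iff[OF f] inj_eq[OF f])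
  then show ?thesis unfolding is_flat_def by (simp add: inj_image_subset_iff[OF f])
qed


theorem proposition3p10:
  shows "\<exists>(X::nat set) \<B>. is_PBD 53 {3,5} X \<B> \<and> PBD_dimension X \<B> = 3"
proof -
  define X where "X = enc ` (UNIV::pt set)"
  define B where "B = image enc ` Bs"
  have P: "is_PBD 53 {3,5} X B" using pbd_transfer[OF inj_enc pbd_pt] unfolding X_def B_def .
  have cX: "card X = 53" and finX: "finite X" using P unfolding is_PBD_def by simp_all
  have flatT: "is_flat X B (enc ` F) \<longleftrightarrow> is_flat UNIV Bs F" for F
    unfolding X_def B_def by (rule flat_transfer[OF inj_enc])
  have S3: "sets_in_proper_flats X B 3"
    unfolding sets_in_proper_flats_def
  proof (intro allI impI)
    fix S assume SX: "S \<subseteq> X \<and> card S = 3"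
    then have "\<exists>x' y' z'. S = {x',y',z'} \<and> x' \<noteq> y' \<and> y' \<noteq> z' \<and> x' \<noteq> z'"
      using card_3_iff[of S] by simp
    then obtain x' y' z' where S: "S = {x',y',z'}" by blast
    have r: "x' \<in> range enc" "y' \<in> range enc" "z' \<in> range enc" using SX S unfolding X_def by auto
    obtain x where x: "x' = enc x" using r(1) by blast
    obtain y where y: "y' = enc y" using r(2) by blast
    obtain z where z: "z' = enc z" using r(3) by blast
    note xyz = x y z
    from P3_all[of x y z] obtain F where F: "good F" "x \<in> F" "y \<in> F" "z \<in> F" unfolding P3_def by blast
    show "\<exists>Y. is_proper_flat X B Y \<and> S \<subseteq> Y"
    proof (intro exI conjI)
      have "is_flat X B (enc ` F)" using flatT closed_flat F(1) unfolding good_def by blast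
      moreover have "enc ` F \<noteq> X" using F(1) inj_image_eq_iff[OF inj_enc] unfolding good_def X_def by blast
      ultimately show "is_proper_flat X B (enc ` F)" unfolding is_proper_flat_def by blast
      show "S \<subseteq> enc ` F" using S xyz F by auto
    qed
  qed
  have N: "\<not> sets_in_proper_flats X B d" if d: "4 \<le> d" "d \<le> card X" for d
  proof
    assume H: "sets_in_proper_flats X B d"
    define S0 where "S0 = {Inf, Pv 0, Av N1 0 0, Av N2 0 0}"
    have "card S0 = 4" unfolding S0_def by simp
    then have c0: "card (enc ` S0) = 4" using card_image[OF inj_on_subset[OF inj_enc]] by simp
    have sub0: "enc ` S0 \<subseteq> X" unfolding X_def by auto
    have "card (X - enc ` S0) = 53 - 4" using card_Diff_subset[OF _ sub0] c0 cX finite_subset[OF sub0 finX] by simp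
    then have "d - 4 \<le> card (X - enc ` S0)" using d cX by simp
    from obtain_subset_with_card_n[OF this] obtain T where
      T: "T \<subseteq> X - enc ` S0" "card T = d - 4" "finite T" by blast
    define S where "S = enc ` S0 \<union> T"
    have "card S = 4 + (d - 4)" unfolding S_def
      using card_Un_disjoint[of "enc ` S0" T] T c0 finite_subset[OF sub0 finX] by auto
    then have cS: "card S = d" using d by simp
    have SX: "S \<subseteq> X" unfolding S_def using T sub0 by auto
    from H SX cS obtain Y where Y: "is_proper_flat X B Y" "S \<subseteq> Y"
      unfolding sets_in_proper_flats_def by blast
    have YX: "Y \<subseteq> X" using Y(1) unfolding is_proper_flat_def is_flat_def by blast
    define F where "F = enc -` Y"
    have YF: "Y = enc ` F" unfolding F_def using YX X_def by auto
    have "is_flat UNIV Bs F" using Y(1) flatT YF unfolding is_proper_flat_def by simp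
    then have cF: "closed F" by (rule flat_closed)
    have "S0 \<subseteq> F" using Y(2) unfolding S_def F_def by auto
    then have "F = UNIV" using gen4[OF cF] unfolding S0_def by simp
    then have "Y = X" using YF X_def by simp
    then show False using Y(1) unfolding is_proper_flat_def by simp
  qed
  have "PBD_dimension X B = 3"
    unfolding PBD_dimension_def
  proof (rule Greatest_equality)
    show "3 \<le> card X \<and> sets_in_proper_flats X B 3" using cX S3 by simp
  next
    fix d assume "d \<le> card X \<and> sets_in_proper_flats X B d"
    then show "d \<le> 3" using N by (cases "4 \<le> d") auto
  qed
  then show ?thesis using P by blast
qed


end
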